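(* Let $\phi$ be a formula of Full Modal Team Logic $\mathcal{FMTL}$, let $(M,X)$ be a team model over a set $Prop$ of letters containing the letters of $\phi$, and let $p$ be a letter. If $(M,X)\models\tilde\exists p\,\phi$, then there is a team model $(K,Z)$ with $(K,Z)\rightleftharpoons_{Prop\setminus\{p\}}(M,X)$ and $(K,Z)\models\phi$.
   Context: Kripke models $M=(W,R,V)$, $V:W\to\mathcal P(Prop)$; team models $(M,X)$, $X\subseteq W$. Formulas of $\mathcal{FMTL}$: $p,\neg p,\bot,NE,\phi_1\wedge\phi_2,\phi_1\otimes\phi_2,\phi_1\vee\phi_2,\Diamond\phi,\Box\phi$. Team semantics: $(M,X)\models p$ iff $p\in V(s)$ for all $s\in X$; $\neg p$ iff $p\notin V(s)$ for all $s\in X$; $\bot$ iff $X=\emptyset$; $NE$ iff $X\neq\emptyset$; $\wedge$ componentwise; $\vee$: $(M,X)$ satisfies one of the disjuncts; $\otimes$: $X=X_1\cup X_2$ with $(M,X_i)\models\phi_i$; $(M,X)\models\Diamond\phi$ iff $(M,Y)\models\phi$ for some $Y$ such that every $x\in X$ has an $R$-successor in $Y$ and every $y\in Y$ is an $R$-successor of some $x\in X$; $(M,X)\models\Box\phi$ iff $(M,R[X])\models\phi$, $R[X]$ the set of successors of elements of $X$. For a set $\mathcal P$ of letters, $(M,w)\rightleftharpoons_{\mathcal P}(N,v)$: some relation containing $(w,v)$ has all pairs agreeing on letters of $\mathcal P$ and satisfying forth and back conditions; $(M,X)\rightleftharpoons_{\mathcal P}(N,Y)$: each $x\in X$ is $\mathcal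 P$-bisimilar to some $y\in Y$ and each $y\in Y$ to some $x\in X$. $(M,X)\models\tilde\exists p\,\phi$ iff there is $(M',X')$ with $(M',X')\rightleftharpoons_{\mathcal L(\phi)\setminus\{p\}}(M,X)$ and $(M',X')\models\phi$, where $\mathcal L(\phi)$ is the set of letters of $\phi$. *)

theory Defs
  imports Main
begin

text \<open>Kripke models: the set of worlds is the whole type 'w;
  R is the accessibility relation, V the valuation (set of true letters).\<close>
record ('w, 'p) kmodel =
  Rel :: "('w \<times> 'w) set"
  Val :: "'w \<Rightarrow> 'p set"

definition model_over :: "'p set \<Rightarrow> ('w, 'p) kmodel \<Rightarrow> bool" where
  "model_over Prop M \<longleftrightarrow> (\<forall>w. Val M w \<subseteq> Prop)"

datatype 'p fmtl =
    Atom 'p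
  | NegAtom 'p
  | Bot
  | NE
  | Conj "'p fmtl" "'p fmtl"
  | Tensor "'p fmtl" "'p fmtl"
  | Disj "'p fmtl" "'p fmtl"
  | Dia "'p fmtl"
  | Box "'p fmtl"

primrec letters :: "'p fmtl \<Rightarrow> 'p set" where
  "letters (Atom p) = {p}"
| "letters (NegAtom p) = {p}"
| "letters Bot = {}"
| "letters NE = {}"
| "letters (Conj a b) = letters a \<union> letters b"
| "letters (Tensor a b) = letters a \<union> letters b"
| "letters (Disj a b) = letters a \<union> letters b"
| "letters (Dia a) = letters a"
| "letters (Box a) = letters a"

primrec sat :: "('w, 'p) kmodel \<Rightarrow> 'w set \<Rightarrow> 'p fmtl \<Rightarrow> bool" where
  "sat M X (Atom p) = (\<forall>s\<in>X. p \<in> Val M s)"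
| "sat M X (NegAtom p) = (\<forall>s\<in>X. p \<notin> Val M s)"
| "sat M X Bot = (X = {})"
| "sat M X NE = (X \<noteq> {})"
| "sat M X (Conj a b) = (sat M X a \<and> sat M X b)"
| "sat M X (Tensor a b) = (\<exists>X1 X2. X = X1 \<union> X2 \<and> sat M X1 a \<and> sat M X2 b)"
| "sat M X (Disj a b) = (sat M X a \<or> sat M X b)"
| "sat M X (Dia a) = (\<exists>Y. (\<forall>x\<in>X. \<exists>y\<in>Y. (x, y) \<in> Rel M)
                         \<and> (\<forall>y\<in>Y. \<exists>x\<in>X. (x, y) \<in> Rel M) \<and> sat M Y a)"
| "sat M X (Box a) = sat M (Rel M `` X) a"

definition bisim_pt :: "'p set \<Rightarrow> ('w, 'p) kmodel \<Rightarrow> 'w \<Rightarrow> ('v, 'p) kmodel \<Rightarrow> 'v \<Rightarrow> bool" where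
  "bisim_pt P M w N v \<longleftrightarrow> (\<exists>Z :: ('w \<times> 'v) set. (w, v) \<in> Z \<and>
     (\<forall>(a, b) \<in> Z.
        Val M a \<inter> P = Val N b \<inter> P
      \<and> (\<forall>a'. (a, a') \<in> Rel M \<longrightarrow> (\<exists>b'. (b, b') \<in> Rel N \<and> (a', b') \<in> Z))
      \<and> (\<forall>b'. (b, b') \<in> Rel N \<longrightarrow> (\<exists>a'. (a, a') \<in> Rel M \<and> (a', b') \<in> Z))))"

definition bisim_team :: "'p set \<Rightarrow> ('w, 'p) kmodel \<Rightarrow> 'w set \<Rightarrow> ('v, 'p) kmodel \<Rightarrow> 'v set \<Rightarrow> bool" where
  "bisim_team P M X N Y \<longleftrightarrow>
     (\<forall>x\<in>X. \<exists>y\<in>Y. bisim_pt P M x N y) \<and> (\<forall>y\<in>Y. \<exists>x\<in>X. bisim_pt P M x N y)"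

text \<open>Bisimulation quantifier, with the witnessing model ranging over models whose
  world type is 'b (given by the first argument).\<close>
definition sat_bex :: "'b itself \<Rightarrow> ('w, 'p) kmodel \<Rightarrow> 'w set \<Rightarrow> 'p \<Rightarrow> 'p fmtl \<Rightarrow> bool" where
  "sat_bex _ M X p \<phi> \<longleftrightarrow> (\<exists>(M' :: ('b, 'p) kmodel) X'.
     bisim_team (letters \<phi> - {p}) M' X' M X \<and> sat M' X' \<phi>)"

end

theory Submission
  imports Defs
begin

lemma pmorph_sat:
  fixes K :: "('w,'p) kmodel" and N :: "('v,'p) kmodel" and f :: "'w \<Rightarrow> 'v"
  assumes hval: "\<forall>w\<in>D. Val K w \<inter> L = Val N (f w) \<inter> L"
    and hforth: "\<forall>w w'. w\<in>D \<longrightarrow> (w,w')\<in>Rel K \<longrightarrow> w'\<in>D \<and> (f w, f w')\<in>Rel N"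
    and hback: "\<forall>w v'. w\<in>D \<longrightarrow> (f w, v')\<in>Rel N \<longrightarrow> (\<exists>w'. (w,w')\<in>Rel K \<and> f w' = v')"
  shows "letters \<phi> \<subseteq> L \<Longrightarrow> Z \<subseteq> D \<Longrightarrow> sat K Z \<phi> = sat N (f`Z) \<phi>"
proof (induction \<phi> arbitrary: Z)
  case (Atom x)
  then show ?case using hval by auto
next
  case (NegAtom x)
  then show ?case using hval by auto
next
  case Bot
  then show ?case by auto
next
  case NE
  then show ?case by auto
next
  case (Conj a b)
  then show ?case by simp
next
  case (Disj a b)
  then show ?case by simp
next
  case (Tensor a b)
  show ?case
  proof
    assume "sat K Z (Tensor a b)"
    then obtain Z1 Z2 where "Z = Z1 \<union> Z2" "sat K Z1 a" "sat K Z2 b" by auto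
    moreover have "sat N (f`Z1) a" using Tensor.IH(1)[of Z1] Tensor.prems calculation by simp
    moreover have "sat N (f`Z2) b" using Tensor.IH(2)[of Z2] Tensor.prems calculation by simp
    ultimately show "sat N (f`Z) (Tensor a b)" by (auto simp: image_Un)
  next
    assume "sat N (f`Z) (Tensor a b)"
    then obtain Y1 Y2 where Y: "f`Z = Y1 \<union> Y2" "sat N Y1 a" "sat N Y2 b" by auto
    define Z1 where "Z1 = Z \<inter> f -` Y1"
    define Z2 where "Z2 = Z \<inter> f -` Y2"
    have "Y1 \<subseteq> f`Z" using Y(1) by auto
    then have e1: "f`Z1 = Y1" unfolding Z1_def by blast
    have "Y2 \<subseteq> f`Z" using Y(1) by auto
    then have e2: "f`Z2 = Y2" unfolding Z2_def by blast
    have "Z = Z1 \<union> Z2" using Y(1) unfolding Z1_def Z2_def by auto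
    moreover have "Z1 \<subseteq> D" "Z2 \<subseteq> D" using Tensor.prems unfolding Z1_def Z2_def by auto
    moreover have "sat K Z1 a" using Tensor.IH(1)[of Z1] Tensor.prems Y(2) e1 calculation by simp
    moreover have "sat K Z2 b" using Tensor.IH(2)[of Z2] Tensor.prems Y(3) e2 calculation by simp
    ultimately show "sat K Z (Tensor a b)" by auto
  qed
next
  case (Box a)
  have sub: "Rel K `` Z \<subseteq> D" using hforth Box.prems by blast
  have eq: "f ` (Rel K `` Z) = Rel N `` (f`Z)"
  proof
    show "f ` (Rel K `` Z) \<subseteq> Rel N `` (f`Z)" using hforth Box.prems by blast
    show "Rel N `` (f`Z) \<subseteq> f ` (Rel K `` Z)"
    proof
      fix v assume "v \<in> Rel N `` (f`Z)"
      then obtain w where "w \<in> Z" "(f w, v) \<in> Rel N" by auto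
      then obtain w' where "(w,w')\<in>Rel K" "f w' = v" using hback Box.prems by blast
      then show "v \<in> f ` (Rel K `` Z)" using \<open>w\<in>Z\<close> by blast
    qed
  qed
  show ?case using Box.IH[OF _ sub] Box.prems eq by simp
next
  case (Dia a)
  show ?case
  proof
    assume "sat K Z (Dia a)"
    then obtain Y where Y: "\<forall>x\<in>Z. \<exists>y\<in>Y. (x, y) \<in> Rel K"
      "\<forall>y\<in>Y. \<exists>x\<in>Z. (x, y) \<in> Rel K" "sat K Y a" by auto
    have sub: "Y \<subseteq> D" using Y(2) hforth Dia.prems by blast
    have "sat N (f`Y) a" using Dia.IH[OF _ sub] Dia.prems Y(3) by simp
    moreover have "\<forall>x\<in>f`Z. \<exists>y\<in>f`Y. (x, y) \<in> Rel N"
    proof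
      fix x assume "x \<in> f`Z"
      then obtain w where w: "w\<in>Z" "x = f w" by auto
      then obtain y where "y\<in>Y" "(w,y)\<in>Rel K" using Y(1) by blast
      then have "(f w, f y) \<in> Rel N" using hforth w Dia.prems by blast
      then show "\<exists>y\<in>f`Y. (x, y) \<in> Rel N" using w \<open>y\<in>Y\<close> by blast
    qed
    moreover have "\<forall>y\<in>f`Y. \<exists>x\<in>f`Z. (x, y) \<in> Rel N"
    proof
      fix y assume "y \<in> f`Y"
      then obtain v where v: "v\<in>Y" "y = f v" by auto
      then obtain w where "w\<in>Z" "(w,v)\<in>Rel K" using Y(2) by blast
      then have "(f w, f v) \<in> Rel N" using hforth Dia.prems by blast
      then show "\<exists>x\<in>f`Z. (x, y) \<in> Rel N" using v \<open>w\<in>Z\<close> by blast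
    qed
    ultimately show "sat N (f`Z) (Dia a)" unfolding sat.simps by blast
  next
    assume "sat N (f`Z) (Dia a)"
    then obtain Y' where Y': "\<forall>x\<in>f`Z. \<exists>y\<in>Y'. (x, y) \<in> Rel N"
      "\<forall>y\<in>Y'. \<exists>x\<in>f`Z. (x, y) \<in> Rel N" "sat N Y' a" by auto
    define Y where "Y = {w'. \<exists>w\<in>Z. (w,w')\<in>Rel K \<and> f w' \<in> Y'}"
    have sub: "Y \<subseteq> D" using hforth Dia.prems unfolding Y_def by blast
    have fy: "f`Y = Y'"
    proof
      show "f`Y \<subseteq> Y'" unfolding Y_def by blast
      show "Y' \<subseteq> f`Y"
      proof
        fix y assume "y \<in> Y'"
        then obtain w where "w\<in>Z" "(f w, y) \<in> Rel N" using Y'(2) by blast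
        then obtain w' where "(w,w')\<in>Rel K" "f w' = y" using hback Dia.prems by blast
        then show "y \<in> f`Y" unfolding Y_def using \<open>w\<in>Z\<close> \<open>y\<in>Y'\<close> by blast
      qed
    qed
    have "sat K Y a" using Dia.IH[OF _ sub] Dia.prems Y'(3) fy by simp
    moreover have "\<forall>x\<in>Z. \<exists>y\<in>Y. (x, y) \<in> Rel K"
    proof
      fix w assume "w\<in>Z"
      then obtain y where "y\<in>Y'" "(f w, y)\<in>Rel N" using Y'(1) by blast
      then obtain w' where "(w,w')\<in>Rel K" "f w' = y" using hback Dia.prems \<open>w\<in>Z\<close> by blast
      then show "\<exists>y\<in>Y. (w, y) \<in> Rel K" unfolding Y_def using \<open>w\<in>Z\<close> \<open>y\<in>Y'\<close> by blast
    qed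
    moreover have "\<forall>y\<in>Y. \<exists>x\<in>Z. (x, y) \<in> Rel K" unfolding Y_def by blast
    ultimately show "sat K Z (Dia a)" unfolding sat.simps by blast
  qed
qed

lemma bisim_forth:
  assumes "bisim_pt Q N b M a" "(a,a') \<in> Rel M"
  shows "\<exists>b'. (b,b') \<in> Rel N \<and> bisim_pt Q N b' M a'"
proof -
  obtain Zr where Zr: "(b,a) \<in> Zr" "\<forall>(x, y) \<in> Zr.
        Val N x \<inter> Q = Val M y \<inter> Q
      \<and> (\<forall>a'. (x, a') \<in> Rel N \<longrightarrow> (\<exists>b'. (y, b') \<in> Rel M \<and> (a', b') \<in> Zr))
      \<and> (\<forall>b'. (y, b') \<in> Rel M \<longrightarrow> (\<exists>a'. (x, a') \<in> Rel N \<and> (a', b') \<in> Zr))"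
    using assms(1) unfolding bisim_pt_def by blast
  then obtain b' where "(b,b') \<in> Rel N" "(b',a') \<in> Zr" using assms(2) by blast
  then show ?thesis using Zr unfolding bisim_pt_def by blast
qed

lemma bisim_back:
  assumes "bisim_pt Q N b M a" "(b,b') \<in> Rel N"
  shows "\<exists>a'. (a,a') \<in> Rel M \<and> bisim_pt Q N b' M a'"
proof -
  obtain Zr where Zr: "(b,a) \<in> Zr" "\<forall>(x, y) \<in> Zr.
        Val N x \<inter> Q = Val M y \<inter> Q
      \<and> (\<forall>a'. (x, a') \<in> Rel N \<longrightarrow> (\<exists>b'. (y, b') \<in> Rel M \<and> (a', b') \<in> Zr))
      \<and> (\<forall>b'. (y, b') \<in> Rel M \<longrightarrow> (\<exists>a'. (x, a') \<in> Rel N \<and> (a', b') \<in> Zr))"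
    using assms(1) unfolding bisim_pt_def by blast
  then obtain a' where "(a,a') \<in> Rel M" "(b',a') \<in> Zr" using assms(2) by blast
  then show ?thesis using Zr unfolding bisim_pt_def by blast
qed

lemma bisim_val:
  assumes "bisim_pt Q N b M a"
  shows "Val N b \<inter> Q = Val M a \<inter> Q"
  using assms unfolding bisim_pt_def by blast

theorem mainTheorem7:
  fixes Prop :: "'p set" and \<phi> :: "'p fmtl" and p :: 'p
    and M :: "('a, 'p) kmodel" and X :: "'a set"
  assumes "letters \<phi> \<subseteq> Prop"
    and "model_over Prop M"
    and "sat_bex TYPE('b) M X p \<phi>"
  shows "\<exists>(K :: ('a \<times> 'b, 'p) kmodel) Z. model_over Prop K \<and>
           bisim_team (Prop - {p}) K Z M X \<and> sat K Z \<phi>"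
proof -
  define L where "L = letters \<phi>"
  define Q where "Q = L - {p}"
  obtain M' :: "('b,'p) kmodel" and X' where bt: "bisim_team Q M' X' M X" and s: "sat M' X' \<phi>"
    using assms(3) unfolding sat_bex_def Q_def L_def by blast
  define B where "B = {(a,b). bisim_pt Q M' b M a}"
  define K :: "('a \<times> 'b, 'p) kmodel" where "K = \<lparr>Rel = {((a,b),(a',b')). (a,b)\<in>B \<and> (a',b')\<in>B \<and> (a,a')\<in>Rel M \<and> (b,b')\<in>Rel M'},
     Val = (\<lambda>(a,b). (Val M a - L) \<union> (Val M' b \<inter> L))\<rparr>"
  define Z where "Z = {(a,b). (a,b)\<in>B \<and> a\<in>X \<and> b\<in>X'}"
  have mo: "model_over Prop K" using assms(1,2) unfolding model_over_def K_def L_def by auto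
  have snd_img: "snd ` Z = X'"
  proof
    show "snd ` Z \<subseteq> X'" unfolding Z_def by auto
    show "X' \<subseteq> snd ` Z"
    proof
      fix b assume "b \<in> X'"
      then obtain a where "a\<in>X" "bisim_pt Q M' b M a" using bt unfolding bisim_team_def by blast
      then show "b \<in> snd ` Z" using \<open>b\<in>X'\<close> unfolding Z_def B_def by force
    qed
  qed
  have satK: "sat K Z \<phi>"
  proof -
    have "sat K Z \<phi> = sat M' (snd`Z) \<phi>"
    proof (rule pmorph_sat[where D=B and L=L])
      show "\<forall>w\<in>B. Val K w \<inter> L = Val M' (snd w) \<inter> L" unfolding K_def by auto
      show "\<forall>w w'. w \<in> B \<longrightarrow> (w, w') \<in> Rel K \<longrightarrow> w' \<in> B \<and> (snd w, snd w') \<in> Rel M'"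
        unfolding K_def by auto
      show "\<forall>w v'. w \<in> B \<longrightarrow> (snd w, v') \<in> Rel M' \<longrightarrow> (\<exists>w'. (w, w') \<in> Rel K \<and> snd w' = v')"
      proof (intro allI impI)
        fix w v' assume "w\<in>B" "(snd w, v') \<in> Rel M'"
        obtain a b where w: "w = (a,b)" by force
        then obtain a' where "(a,a')\<in>Rel M" "bisim_pt Q M' v' M a'"
          using bisim_back \<open>w\<in>B\<close> \<open>(snd w, v') \<in> Rel M'\<close> unfolding B_def by fastforce
        then show "\<exists>w'. (w, w') \<in> Rel K \<and> snd w' = v'"
          using w \<open>w\<in>B\<close> \<open>(snd w, v') \<in> Rel M'\<close>
          by (intro exI[of _ "(a',v')"]) (auto simp: K_def B_def)
      qed
      show "letters \<phi> \<subseteq> L" unfolding L_def by simp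
      show "Z \<subseteq> B" unfolding Z_def by auto
    qed
    then show ?thesis using s snd_img by simp
  qed
  have fstb: "bisim_pt (Prop - {p}) K (a,b) M a" if "(a,b)\<in>B" for a b
    unfolding bisim_pt_def
  proof (intro exI[of _ "{((a,b),a) | a b. (a,b)\<in>B}"] conjI)
    show "((a, b), a) \<in> {((a, b), a) |a b. (a, b) \<in> B}" using that by blast
    show "\<forall>(x, y)\<in>{((a, b), a) |a b. (a, b) \<in> B}.
       Val K x \<inter> (Prop - {p}) = Val M y \<inter> (Prop - {p}) \<and>
       (\<forall>a'. (x, a') \<in> Rel K \<longrightarrow> (\<exists>b'. (y, b') \<in> Rel M \<and> (a', b') \<in> {((a, b), a) |a b. (a, b) \<in> B})) \<and>
       (\<forall>b'. (y, b') \<in> Rel M \<longrightarrow> (\<exists>a'. (x, a') \<in> Rel K \<and> (a', b') \<in> {((a, b), a) |a b. (a, b) \<in> B}))"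
    proof (clarify, intro conjI allI impI)
      fix a0 b0 assume ab: "(a0,b0)\<in>B"
      have v: "Val M' b0 \<inter> Q = Val M a0 \<inter> Q" using ab bisim_val unfolding B_def by fastforce
      show "Val K (a0,b0) \<inter> (Prop - {p}) = Val M a0 \<inter> (Prop - {p})"
      proof (rule set_eqI)
        fix x show "x \<in> Val K (a0,b0) \<inter> (Prop - {p}) \<longleftrightarrow> x \<in> Val M a0 \<inter> (Prop - {p})"
          using v unfolding K_def Q_def by (cases "x \<in> L") auto
      qed
      show "\<exists>b'. (a0, b') \<in> Rel M \<and> (a', b') \<in> {((a, b), a) |a b. (a, b) \<in> B}"
        if "((a0, b0), a') \<in> Rel K" for a'
        using that unfolding K_def by auto
      show "\<exists>a'. ((a0, b0), a') \<in> Rel K \<and> (a', b') \<in> {((a, b), a) |a b. (a, b) \<in> B}"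
        if rb: "(a0, b') \<in> Rel M" for b'
      proof -
        obtain c where "(b0,c)\<in>Rel M'" "bisim_pt Q M' c M b'"
          using bisim_forth[of Q M' b0 M a0 b'] ab rb unfolding B_def by blast
        then show ?thesis using ab rb
          by (intro exI[of _ "(b',c)"]) (auto simp: K_def B_def)
      qed
    qed
  qed
  have "bisim_team (Prop - {p}) K Z M X"
    unfolding bisim_team_def
  proof (intro conjI ballI)
    fix z assume "z\<in>Z"
    then show "\<exists>y\<in>X. bisim_pt (Prop - {p}) K z M y" using fstb unfolding Z_def by auto
  next
    fix x assume "x\<in>X"
    then obtain b where "b\<in>X'" "bisim_pt Q M' b M x" using bt unfolding bisim_team_def by blast
    then have "(x,b)\<in>Z" using \<open>x\<in>X\<close> unfolding Z_def B_def by auto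
    then show "\<exists>z\<in>Z. bisim_pt (Prop - {p}) K z M x" using fstb unfolding Z_def by blast
  qed
  then show ?thesis using mo satK by blast
qed

end
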